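(* Let $\ell\ge 2$, let $G$ be an $n$-vertex graph with average degree $d>0$, and let $x_{i-1}y_{i-1}$ and $x_{i+1}y_{i+1}$ be vertex-disjoint edges of $G$ such that $(x_{i-1},y_{i-1},x_{i+1},y_{i+1})$ is not rich. Then $$\sum_{(x_i,y_i)}\frac{1}{\max\big(d(x_{i-1},y_i),\frac{d^2}{n}\big)\cdot \max\big(d(x_i,y_{i+1}),\frac{d^2}{n}\big)}\le 8\ell,$$ where the sum is over all pairs $(x_i,y_i)$ of vertices such that $x_{i-1},y_{i-1},x_i,y_i,x_{i+1},y_{i+1}$ are distinct and $x_iy_i,\ x_{i-1}x_i,\ x_ix_{i+1},\ y_{i-1}y_i,\ y_iy_{i+1}\in E(G)$ (i.e. these six vertices form a copy of $P_3^{\square}$).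
   Context: $d(a,b)$ denotes the number of common neighbours of $a,b$ in $G$. For distinct vertices $w,z,w',z'$, the $4$-tuple $(w,z,w',z')$ is rich if $wz,w'z'\in E(G)$ and there are at least $4\ell$ pairwise vertex-disjoint edges $xy\in E(G)$ with $wx,xw',zy,yz'\in E(G)$. *)

theory Defs
  imports Complex_Main
begin

definition simple_graph :: "'a set \<Rightarrow> ('a \<Rightarrow> 'a \<Rightarrow> bool) \<Rightarrow> bool" where
  "simple_graph V E \<longleftrightarrow> finite V \<and> (\<forall>u v. E u v \<longrightarrow> u \<in> V \<and> v \<in> V)
     \<and> (\<forall>u v. E u v \<longrightarrow> E v u) \<and> (\<forall>u. \<not> E u u)"

definition num_edges :: "'a set \<Rightarrow> ('a \<Rightarrow> 'a \<Rightarrow> bool) \<Rightarrow> nat" where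
  "num_edges V E = card {{u, v} | u v. u \<in> V \<and> v \<in> V \<and> E u v}"

definition avg_degree :: "'a set \<Rightarrow> ('a \<Rightarrow> 'a \<Rightarrow> bool) \<Rightarrow> real" where
  "avg_degree V E = 2 * real (num_edges V E) / real (card V)"

definition codeg :: "'a set \<Rightarrow> ('a \<Rightarrow> 'a \<Rightarrow> bool) \<Rightarrow> 'a \<Rightarrow> 'a \<Rightarrow> nat" where
  "codeg V E a b = card {c \<in> V. E a c \<and> E b c}"

definition rich :: "'a set \<Rightarrow> ('a \<Rightarrow> 'a \<Rightarrow> bool) \<Rightarrow> nat \<Rightarrow> 'a \<Rightarrow> 'a \<Rightarrow> 'a \<Rightarrow> 'a \<Rightarrow> bool" where
  "rich V E l w z w' z' \<longleftrightarrow>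
     w \<in> V \<and> z \<in> V \<and> w' \<in> V \<and> z' \<in> V \<and> distinct [w, z, w', z'] \<and> E w z \<and> E w' z' \<and>
     (\<exists>M. M \<subseteq> {(x, y). x \<in> V \<and> y \<in> V \<and> E x y \<and> E w x \<and> E x w' \<and> E z y \<and> E y z'}
        \<and> finite M \<and> card M \<ge> 4 * l
        \<and> (\<forall>p\<in>M. \<forall>q\<in>M. p \<noteq> q \<longrightarrow> {fst p, snd p} \<inter> {fst q, snd q} = {}))"

end

theory Submission
  imports Defs
begin

lemma sum_half:
  fixes f :: "'b \<Rightarrow> real"
  assumes "finite A" "\<And>p. p \<in> A \<Longrightarrow> f p \<le> 1/(2*real c)" "card A \<le> c"
  shows "sum f A \<le> 1/2"
proof (cases "A = {}")
  case True then show ?thesis by simp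
next
  case False
  then have "card A > 0" using assms(1) by (simp add: card_gt_0_iff)
  hence c: "c > 0" using assms(3) by simp
  have "sum f A \<le> real (card A) * (1/(2*real c))" by (rule sum_bounded_above) (rule assms(2))
  also have "\<dots> \<le> real c * (1/(2*real c))" using assms(3) by (intro mult_right_mono) auto
  also have "\<dots> = 1/2" using c by simp
  finally show ?thesis .
qed

lemma term_le:
  fixes a c :: nat and D :: real
  assumes "a \<ge> 2" "c \<ge> 1"
  shows "1 / (max (real a) D * max (real c) D) \<le> 1/(2 * real c)"
proof -
  have "1 / (max (real a) D * max (real c) D) \<le> 1/(real a * real c)"
    using assms by (intro divide_left_mono mult_mono) auto
  also have "\<dots> \<le> 1/(2 * real c)"
    using assms by (intro divide_left_mono mult_right_mono) auto
  finally show ?thesis .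
qed

lemma card2: "finite B \<Longrightarrow> u \<in> B \<Longrightarrow> w \<in> B \<Longrightarrow> u \<noteq> w \<Longrightarrow> card B \<ge> 2"
  using card_mono[of B "{u,w}"] by auto

theorem lemma5p10:
  fixes V :: "'a set" and E :: "'a \<Rightarrow> 'a \<Rightarrow> bool" and l :: nat
    and xa ya xb yb :: 'a
  assumes "simple_graph V E"
    and "l \<ge> 2"
    and "avg_degree V E > 0"
    and "E xa ya" and "E xb yb" and "distinct [xa, ya, xb, yb]"
    and "\<not> rich V E l xa ya xb yb"
  shows "(\<Sum>(x, y) \<in> {(x, y). x \<in> V \<and> y \<in> V \<and> distinct [xa, ya, x, y, xb, yb]
              \<and> E x y \<and> E xa x \<and> E x xb \<and> E ya y \<and> E y yb}.
           1 / (max (real (codeg V E xa y)) ((avg_degree V E)\<^sup>2 / real (card V))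
              * max (real (codeg V E x yb)) ((avg_degree V E)\<^sup>2 / real (card V))))
         \<le> 8 * real l"
proof -
  define D where "D = (avg_degree V E)\<^sup>2 / real (card V)"
  define S where "S = {(x, y). x \<in> V \<and> y \<in> V \<and> distinct [xa, ya, x, y, xb, yb]
              \<and> E x y \<and> E xa x \<and> E x xb \<and> E ya y \<and> E y yb}"
  define f where "f = (\<lambda>(x,y). 1 / (max (real (codeg V E xa y)) D * max (real (codeg V E x yb)) D))"
  have G: "finite V" "\<And>u v. E u v \<Longrightarrow> u \<in> V" "\<And>u v. E u v \<Longrightarrow> v \<in> V" "\<And>u v. E u v \<Longrightarrow> E v u"
    using assms(1) unfolding simple_graph_def by auto
  have finS: "finite S" by (rule finite_subset[of S "V \<times> V"]) (auto simp: S_def G(1))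
  define Ms where "Ms = {M. M \<subseteq> S \<and> (\<forall>p\<in>M. \<forall>q\<in>M. p \<noteq> q \<longrightarrow> {fst p, snd p} \<inter> {fst q, snd q} = {})}"
  have "finite Ms" unfolding Ms_def using finS by (auto intro: finite_subset[of _ "Pow S"])
  moreover have "{} \<in> Ms" unfolding Ms_def by auto
  ultimately obtain M where M: "M \<in> Ms" "\<forall>B\<in>Ms. M \<le> B \<longrightarrow> M = B"
    using finite_has_maximal[of Ms] by blast
  define W where "W = fst ` M \<union> snd ` M"
  have MS: "M \<subseteq> S" using M(1) unfolding Ms_def by auto
  have finM: "finite M" using MS finS finite_subset by auto
  have cover: "fst p \<in> W \<or> snd p \<in> W" if "p \<in> S" for p
  proof (rule ccontr)
    assume nc: "\<not> (fst p \<in> W \<or> snd p \<in> W)"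
    have disj: "{fst p, snd p} \<inter> {fst q, snd q} = {}" if "q \<in> M" for q
    proof -
      have "fst q \<in> W" "snd q \<in> W" using that unfolding W_def by auto
      then show ?thesis using nc by auto
    qed
    have MM: "\<forall>a\<in>M. \<forall>b\<in>M. a \<noteq> b \<longrightarrow> {fst a, snd a} \<inter> {fst b, snd b} = {}"
      using M(1) unfolding Ms_def by blast
    have "insert p M \<in> Ms"
      unfolding Ms_def
    proof (intro CollectI conjI ballI impI)
      show "insert p M \<subseteq> S" using MS \<open>p \<in> S\<close> by blast
      fix a b assume ab: "a \<in> insert p M" "b \<in> insert p M" "a \<noteq> b"
      show "{fst a, snd a} \<inter> {fst b, snd b} = {}"
      proof (cases "a = p")
        case True
        then have "b \<in> M" using ab by auto
        then show ?thesis using disj True by blast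
      next
        case False
        then have aM: "a \<in> M" using ab by auto
        show ?thesis
        proof (cases "b = p")
          case True
          then show ?thesis using disj[OF aM] by blast
        next
          case False
          then show ?thesis using MM aM ab by blast
        qed
      qed
    qed
    then have "p \<in> M" using M(2) by auto
    then show False using nc unfolding W_def by auto
  qed
  have cardM: "card M < 4 * l"
  proof (rule ccontr)
    assume "\<not> card M < 4 * l"
    then have "rich V E l xa ya xb yb"
      unfolding rich_def using assms(4,5,6) G(2,3) MS finM M(1)
      by (intro conjI exI[of _ M]) (auto simp: S_def Ms_def)
    then show False using assms(7) by simp
  qed
  have cardW: "card W \<le> 2 * card M"
    unfolding W_def using card_Un_le[of "fst ` M" "snd ` M"] card_image_le[OF finM, of fst]
      card_image_le[OF finM, of snd] by linarith
  have finW: "finite W" unfolding W_def using finM by auto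
  have fnn: "f p \<ge> 0" for p unfolding f_def by (auto split: prod.splits)
  have A_bd: "sum f {p \<in> S. fst p = v} \<le> 1/2" for v
  proof (rule sum_half[where c = "codeg V E v yb"])
    show "finite {p \<in> S. fst p = v}" using finS by auto
    show "card {p \<in> S. fst p = v} \<le> codeg V E v yb"
      unfolding codeg_def
      by (rule card_inj_on_le[of snd]) (auto simp: inj_on_def S_def G(1) dest: G(4))
    fix p assume p: "p \<in> {p \<in> S. fst p = v}"
    obtain y where py: "p = (v, y)" using p by (cases p) auto
    have a: "codeg V E xa y \<ge> 2" unfolding codeg_def
      by (rule card2[of _ v ya]) (use p py G assms(4,5) in \<open>auto simp: S_def\<close>)
    have c: "codeg V E v yb \<ge> 1" unfolding codeg_def
      using card2 p py G by (auto simp: S_def Suc_le_eq card_gt_0_iff)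
    show "f p \<le> 1 / (2 * real (codeg V E v yb))"
      unfolding f_def py using term_le[OF a c] by simp
  qed
  have B_bd: "sum f {p \<in> S. snd p = v} \<le> 1/2" for v
  proof (rule sum_half[where c = "codeg V E xa v"])
    show "finite {p \<in> S. snd p = v}" using finS by auto
    show "card {p \<in> S. snd p = v} \<le> codeg V E xa v"
      unfolding codeg_def
      by (rule card_inj_on_le[of fst]) (auto simp: inj_on_def S_def G(1) dest: G(4))
    fix p assume p: "p \<in> {p \<in> S. snd p = v}"
    obtain x where px: "p = (x, v)" using p by (cases p) auto
    have a: "codeg V E x yb \<ge> 2" unfolding codeg_def
      by (rule card2[of _ v xb]) (use p px G assms(4,5) in \<open>auto simp: S_def\<close>)
    have c: "codeg V E xa v \<ge> 1" unfolding codeg_def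
      using p px G by (auto simp: S_def Suc_le_eq card_gt_0_iff)
    show "f p \<le> 1 / (2 * real (codeg V E xa v))"
      unfolding f_def px using term_le[OF a c] by (simp add: mult.commute)
  qed
  have "sum f S \<le> (\<Sum>p\<in>S. (\<Sum>v\<in>W. (if fst p = v then f p else 0)) + (\<Sum>v\<in>W. (if snd p = v then f p else 0)))"
  proof (rule sum_mono)
    fix p assume "p \<in> S"
    then show "f p \<le> (\<Sum>v\<in>W. (if fst p = v then f p else 0)) + (\<Sum>v\<in>W. (if snd p = v then f p else 0))"
      using cover[of p] fnn[of p] finW by (auto simp: sum.delta)
  qed
  also have "\<dots> = (\<Sum>v\<in>W. (\<Sum>p\<in>S. (if fst p = v then f p else 0)) + (\<Sum>p\<in>S. (if snd p = v then f p else 0)))"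
    by (simp add: sum.distrib sum.swap[of _ S W])
  also have "\<dots> = (\<Sum>v\<in>W. sum f {p \<in> S. fst p = v} + sum f {p \<in> S. snd p = v})"
    using finS by (simp add: sum.inter_filter)
  also have "\<dots> \<le> (\<Sum>v\<in>W. 1)"
    proof (rule sum_mono)
    fix v show "sum f {p \<in> S. fst p = v} + sum f {p \<in> S. snd p = v} \<le> 1"
      using A_bd[of v] B_bd[of v] by linarith
  qed
  also have "\<dots> = real (card W)" by simp
  also have "\<dots> \<le> 8 * real l" using cardW cardM by simp
  finally have "sum f S \<le> 8 * real l" .
  then show ?thesis unfolding S_def f_def D_def .
qed

end
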